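(* Consider the binary SNR model with users $k\in\mathcal{K}$, resource blocks $r\in\mathcal{R}$, a 0/1 matrix $(\delta_r^k)$, positive integers $d_k$, and all utilities $w^k=1$. Let $d=\max_{k\in\mathcal{K}}d_k$. The GREEDY algorithm processes users in decreasing order of utility (ties broken randomly); when processing user $k$, if at least $d_k$ resource blocks that are active for $k$ ($\delta_r^k=1$) are still unassigned, it assigns $d_k$ of them, chosen at random, to user $k$ and admits $k$; otherwise user $k$ is rejected and assigned nothing. Then the number of users admitted by GREEDY is at least $\frac{1}{d+1}$ times the optimal value of $\max\sum_k z^k$ over $x_r^k\in\{0,1\}$, $z^k\in\{0,1\}$ subject to $\sum_k x_r^k\le1$ for every $r$, $\sum_r x_r^k\ge d_k z^k$ for every $k$, and $x_r^k\le\delta_r^k$ for all $(r,k)$.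
   Context: $x_r^k=1$ means resource block $r$ is assigned to user $k$; $\delta_r^k=1$ means block $r$ is active for user $k$; $z^k=1$ means user $k$ is admitted, which requires at least $d_k$ assigned active blocks; each block goes to at most one user. *)

theory Defs
  imports Complex_Main
begin

definition snr_feasible ::
  "'k set \<Rightarrow> 'r set \<Rightarrow> ('k \<Rightarrow> 'r \<Rightarrow> nat) \<Rightarrow> ('k \<Rightarrow> nat)
   \<Rightarrow> ('k \<Rightarrow> 'r \<Rightarrow> nat) \<Rightarrow> ('k \<Rightarrow> nat) \<Rightarrow> bool" where
  "snr_feasible K R delta dem x z \<longleftrightarrow>
     (\<forall>k\<in>K. \<forall>r\<in>R. x k r \<in> {0,1}) \<and> (\<forall>k\<in>K. z k \<in> {0,1}) \<and>
     (\<forall>r\<in>R. (\<Sum>k\<in>K. x k r) \<le> 1) \<and>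
     (\<forall>k\<in>K. (\<Sum>r\<in>R. x k r) \<ge> dem k * z k) \<and>
     (\<forall>k\<in>K. \<forall>r\<in>R. x k r \<le> delta k r)"

definition snr_opt ::
  "'k set \<Rightarrow> 'r set \<Rightarrow> ('k \<Rightarrow> 'r \<Rightarrow> nat) \<Rightarrow> ('k \<Rightarrow> nat) \<Rightarrow> nat" where
  "snr_opt K R delta dem =
     Max {(\<Sum>k\<in>K. z k) | x z. snr_feasible K R delta dem x z}"

text \<open>The users are processed in the order of the list
  (a list of the users; with all utilities equal, every order is a valid tie-breaking). When processing user k: if at least dem k active unassigned blocks remain,
  an arbitrary (random) subset S of exactly dem k of them is assigned to k and k is admitted;
  otherwise k is rejected.\<close>
inductive greedy_run ::
  "'r set \<Rightarrow> ('k \<Rightarrow> 'r \<Rightarrow> nat) \<Rightarrow> ('k \<Rightarrow> nat) \<Rightarrow> 'k list \<Rightarrow> 'r set \<Rightarrow> 'k set \<Rightarrow> bool"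
  for R delta dem where
  start: "greedy_run R delta dem [] {} {}"
| admit: "greedy_run R delta dem ks U A \<Longrightarrow>
          card ({r\<in>R. delta k r = 1} - U) \<ge> dem k \<Longrightarrow>
          S \<subseteq> {r\<in>R. delta k r = 1} - U \<Longrightarrow> card S = dem k \<Longrightarrow>
          greedy_run R delta dem (ks @ [k]) (U \<union> S) (insert k A)"
| reject: "greedy_run R delta dem ks U A \<Longrightarrow>
          card ({r\<in>R. delta k r = 1} - U) < dem k \<Longrightarrow>
          greedy_run R delta dem (ks @ [k]) U A"

end

theory Submission
  imports Defs
begin

lemma greedy_inv:
  assumes "greedy_run R delta dem ks U A" and "finite R"
  shows "U \<subseteq> R \<and> A \<subseteq> set ks \<and> (distinct ks \<longrightarrow> card U \<le> (\<Sum>a\<in>A. dem a)) \<and>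
         (\<forall>k\<in>set ks - A. card ({r\<in>R. delta k r = 1} - U) < dem k)"
  using assms(1)
proof (induction rule: greedy_run.induct)
  case start
  then show ?case by simp
next
  case (admit ks U A k S)
  have fS: "finite S" using admit.hyps(3) assms(2) finite_subset[of S R] by blast
  have fU: "finite U" using admit.IH assms(2) finite_subset by blast
  have "U \<union> S \<subseteq> R" using admit.IH admit.hyps(3) by blast
  moreover have "insert k A \<subseteq> set (ks @ [k])" using admit.IH by auto
  moreover have "distinct (ks @ [k]) \<longrightarrow> card (U \<union> S) \<le> (\<Sum>a\<in>insert k A. dem a)"
  proof
    assume d: "distinct (ks @ [k])"
    then have "k \<notin> A" using admit.IH by auto
    moreover have "finite A" using admit.IH finite_subset by blast
    ultimately have "(\<Sum>a\<in>insert k A. dem a) = dem k + (\<Sum>a\<in>A. dem a)" by simp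
    moreover have "card (U \<union> S) \<le> card U + card S" by (rule card_Un_le)
    moreover have "card U \<le> (\<Sum>a\<in>A. dem a)" using admit.IH d by simp
    ultimately show "card (U \<union> S) \<le> (\<Sum>a\<in>insert k A. dem a)" using admit.hyps(4) by linarith
  qed
  moreover have "\<forall>k'\<in>set (ks @ [k]) - insert k A. card ({r\<in>R. delta k' r = 1} - (U \<union> S)) < dem k'"
  proof
    fix k' assume k': "k' \<in> set (ks @ [k]) - insert k A"
    then have "k' \<in> set ks - A" by auto
    then have "card ({r\<in>R. delta k' r = 1} - U) < dem k'" using admit.IH by blast
    moreover have "card ({r\<in>R. delta k' r = 1} - (U \<union> S)) \<le> card ({r\<in>R. delta k' r = 1} - U)"
      by (rule card_mono) (use assms(2) in auto)
    ultimately show "card ({r\<in>R. delta k' r = 1} - (U \<union> S)) < dem k'" by linarith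
  qed
  ultimately show ?case by blast
next
  case (reject ks U A k)
  then show ?case by auto
qed

theorem proposition2:
  fixes K :: "'k set" and R :: "'r set"
    and delta :: "'k \<Rightarrow> 'r \<Rightarrow> nat" and dem :: "'k \<Rightarrow> nat"
    and order :: "'k list" and U :: "'r set" and A :: "'k set"
  assumes "finite K" and "finite R"
    and "\<forall>k\<in>K. \<forall>r\<in>R. delta k r \<in> {0, 1}"
    and "\<forall>k\<in>K. dem k > 0"
    and "distinct order" and "set order = K"
    and "greedy_run R delta dem order U A"
  shows "real (card A) \<ge> real (snr_opt K R delta dem) / real (Max (dem ` K) + 1)"
proof -
  let ?d = "Max (dem ` K)"
  have inv: "U \<subseteq> R" "A \<subseteq> K" "card U \<le> (\<Sum>a\<in>A. dem a)"
     "\<forall>k\<in>K - A. card ({r\<in>R. delta k r = 1} - U) < dem k"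
    using greedy_inv[OF assms(7) assms(2)] assms(5,6) by auto
  have fA: "finite A" using inv(2) assms(1) finite_subset by blast
  have fU: "finite U" using inv(1) assms(2) finite_subset by blast
  have sumA: "(\<Sum>a\<in>A. dem a) \<le> card A * ?d"
  proof -
    have "(\<Sum>a\<in>A. dem a) \<le> (\<Sum>a\<in>A. ?d)"
      by (rule sum_mono) (use inv(2) assms(1) in auto)
    then show ?thesis by simp
  qed
  let ?S = "{(\<Sum>k\<in>K. z k) | x z. snr_feasible K R delta dem x z}"
  have Ssub: "?S \<subseteq> {..card K}"
  proof
    fix s assume "s \<in> ?S"
    then obtain x z where s: "s = (\<Sum>k\<in>K. z k)" and f: "snr_feasible K R delta dem x z" by blast
    have "(\<Sum>k\<in>K. z k) \<le> (\<Sum>k\<in>K. 1)"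
      by (rule sum_mono) (use f in \<open>auto simp: snr_feasible_def\<close>)
    then show "s \<in> {..card K}" using s by simp
  qed
  have "snr_feasible K R delta dem (\<lambda>_ _. 0) (\<lambda>_. 0)"
    using assms(3) by (auto simp: snr_feasible_def)
  then have "0 \<in> ?S" by force
  then have "snr_opt K R delta dem \<in> ?S" unfolding snr_opt_def
    by (intro Max_in) (auto intro: finite_subset[OF Ssub])
  then obtain x z where opt: "snr_opt K R delta dem = (\<Sum>k\<in>K. z k)"
    and f: "snr_feasible K R delta dem x z" by blast
  define Opt where "Opt = {k\<in>K. z k = 1}"
  have "(\<Sum>k\<in>K. z k) = (\<Sum>k\<in>Opt. 1)"
    unfolding Opt_def using f assms(1) by (intro sum.mono_neutral_cong_right) (auto simp: snr_feasible_def)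
  then have optO: "snr_opt K R delta dem = card Opt" using opt by simp
  define B where "B k = {r\<in>R. x k r = 1}" for k
  have cardB: "card (B k) \<ge> dem k" if "k \<in> Opt" for k
  proof -
    have "(\<Sum>r\<in>R. x k r) = (\<Sum>r\<in>B k. 1)"
      unfolding B_def using f assms(2) that unfolding Opt_def
      by (intro sum.mono_neutral_cong_right) (auto simp: snr_feasible_def, fastforce)
    then show ?thesis using f that unfolding Opt_def snr_feasible_def by auto
  qed
  have Bact: "B k \<subseteq> {r\<in>R. delta k r = 1}" if "k \<in> K" for k
  proof
    fix r assume "r \<in> B k"
    then have "r \<in> R" "x k r = 1" unfolding B_def by auto
    moreover have "x k r \<le> delta k r" "delta k r \<in> {0,1}" using f assms(3) that \<open>r \<in> R\<close>
      unfolding snr_feasible_def by auto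
    ultimately show "r \<in> {r\<in>R. delta k r = 1}" by auto
  qed
  have Bdisj: "k1 = k2" if "k1 \<in> K" "k2 \<in> K" "r \<in> B k1" "r \<in> B k2" for k1 k2 r
  proof (rule ccontr)
    assume ne: "k1 \<noteq> k2"
    have r: "r \<in> R" "x k1 r = 1" "x k2 r = 1" using that unfolding B_def by auto
    have "(\<Sum>k\<in>{k1,k2}. x k r) \<le> (\<Sum>k\<in>K. x k r)"
      by (rule sum_mono2) (use assms(1) that in auto)
    moreover have "(\<Sum>k\<in>K. x k r) \<le> 1" using f r(1) unfolding snr_feasible_def by auto
    ultimately show False using ne r by simp
  qed
  have hit: "B k \<inter> U \<noteq> {}" if "k \<in> Opt - A" for k
  proof
    assume e: "B k \<inter> U = {}"
    have kK: "k \<in> K" using that Opt_def by auto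
    have "B k \<subseteq> {r\<in>R. delta k r = 1} - U" using Bact[OF kK] e by auto
    then have "card (B k) \<le> card ({r\<in>R. delta k r = 1} - U)"
      by (rule card_mono[rotated]) (use assms(2) in auto)
    moreover have "card ({r\<in>R. delta k r = 1} - U) < dem k" using inv(4) kK that by auto
    ultimately show False using cardB that by force
  qed
  define g where "g k = (SOME r. r \<in> B k \<inter> U)" for k
  have g: "g k \<in> B k \<inter> U" if "k \<in> Opt - A" for k
    unfolding g_def using hit[OF that] by (metis some_in_eq)
  have "inj_on g (Opt - A)"
  proof (rule inj_onI)
    fix a b
    assume ab: "a \<in> Opt - A" "b \<in> Opt - A" "g a = g b"
    have "g a \<in> B a" "g a \<in> B b" using g[OF ab(1)] g[OF ab(2)] ab(3) by auto
    moreover have "a \<in> K" "b \<in> K" using ab unfolding Opt_def by auto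
    ultimately show "a = b" using Bdisj by blast
  qed
  moreover have "g ` (Opt - A) \<subseteq> U" using g by auto
  ultimately have "card (Opt - A) \<le> card U" using fU by (metis card_inj_on_le)
  moreover have "finite Opt" using assms(1) Opt_def by auto
  then have "card Opt \<le> card ((Opt - A) \<union> A)"
    using fA by (intro card_mono) auto
  then have "card Opt \<le> card (Opt - A) + card A"
    using card_Un_le[of "Opt - A" A] by linarith
  ultimately have "card Opt \<le> card A * ?d + card A" using inv(3) sumA by linarith
  then have "real (snr_opt K R delta dem) \<le> real (card A) * real (?d + 1)"
  proof -
    have "card Opt \<le> card A * (?d + 1)" using \<open>card Opt \<le> card A * ?d + card A\<close> by (simp add: algebra_simps)
    then have "real (card Opt) \<le> real (card A * (?d + 1))" by (simp only: of_nat_le_iff)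
    then show ?thesis using optO by (simp add: algebra_simps)
  qed
  then show ?thesis by (simp add: divide_le_eq mult.commute)
qed

end
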